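(* Let $f:\mathcal{P}^n\to X$ be an onto, tops-only voting rule. Then $f$ is not obviously manipulable (NOM) if and only if every veto is a strong veto, i.e., $SV_i=V_i$ for each agent $i\in N$.
   Context: $N=\{1,\dots,n\}$ with $n\ge 2$ is the set of agents and $X$ is a finite set of alternatives with $|X|=m\ge 2$. $\mathcal{P}$ is the set of all strict preferences (linear orders) over $X$; for $P_i\in\mathcal{P}$, $t(P_i)$ is its top (best) alternative and $R_i$ the associated weak preference ($xR_iy$ iff $x=y$ or $xP_iy$). A rule is a function $f:\mathcal{P}^n\to X$, assumed onto. It is tops-only if $f(P)=f(P')$ whenever $t(P_i)=t(P_i')$ for all $i$. For $P_i\in\mathcal{P}$, the option set is $O^f(P_i)=\{f(P_i,P_{-i}):P_{-i}\in\mathcal{P}^{n-1}\}$. For $Y\subseteq X$ nonempty, $B(P_i,Y)$ and $W(P_i,Y)$ denote the best and worst elements of $Y$ according to $P_i$. A report $P_i'$ is a (profitable) manipulation of $f$ at $P_i$ if there is $P_{-i}$ with $f(P_i',P_{-i})\,P_i\,f(P_i,P_{-i})$. Such a manipulation is obvious if $W(P_i,O^f(P_i'))\,P_i\,W(P_i,O^f(P_i))$ or $B(P_i,O^f(P_i'))\,P_i\,B(P_i,O^f(P_i))$. $f$ is NOM if no agent has an obvious manipulation at any preference. Agent $i$ vetoes $x$ via $P_i$ if $x\notin O^f(P_i)$; $V_i$ is the set of alternatives that $i$ vetoes via some preference; for $x\in V_i$, $\mathcal{V}_i^x=\{P_i\in\mathcal{P}: i \text{ vetoes } x \text{ via } P_i\}$.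 Agent $i$ strongly vetoes $x$ if $\mathcal{V}_i^x=\{P_i\in\mathcal{P}:t(P_i)\neq x\}$; $SV_i$ is the set of alternatives strongly vetoed by $i$. *)

theory Defs
  imports Main "HOL-Library.Cardinality"
begin

text \<open>Agents form a finite type 'i (N), alternatives a finite type 'a (X).
 A strict preference is a strict linear order on X, given as a relation:
 (x,y) \<in> P means x P y (x strictly better than y).\<close>

definition prefs :: "'a rel set" where
  "prefs = {P. strict_linear_order P}"

definition profiles :: "('i \<Rightarrow> 'a rel) set" where
  "profiles = {Pr. \<forall>i. Pr i \<in> prefs}"

definition top :: "'a rel \<Rightarrow> 'a" where
  "top P = (THE x. \<forall>y. y \<noteq> x \<longrightarrow> (x, y) \<in> P)"

definition best :: "'a rel \<Rightarrow> 'a set \<Rightarrow> 'a" where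
  "best P Y = (THE x. x \<in> Y \<and> (\<forall>y\<in>Y. y \<noteq> x \<longrightarrow> (x, y) \<in> P))"

definition worst :: "'a rel \<Rightarrow> 'a set \<Rightarrow> 'a" where
  "worst P Y = (THE x. x \<in> Y \<and> (\<forall>y\<in>Y. y \<noteq> x \<longrightarrow> (y, x) \<in> P))"

definition onto_rule :: "(('i \<Rightarrow> 'a rel) \<Rightarrow> 'a) \<Rightarrow> bool" where
  "onto_rule f \<longleftrightarrow> f ` profiles = UNIV"

definition tops_only :: "(('i \<Rightarrow> 'a rel) \<Rightarrow> 'a) \<Rightarrow> bool" where
  "tops_only f \<longleftrightarrow> (\<forall>P\<in>profiles. \<forall>P'\<in>profiles.
      (\<forall>i. top (P i) = top (P' i)) \<longrightarrow> f P = f P')"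

definition option_set :: "(('i \<Rightarrow> 'a rel) \<Rightarrow> 'a) \<Rightarrow> 'i \<Rightarrow> 'a rel \<Rightarrow> 'a set" where
  "option_set f i Pi = {f (Pr(i := Pi)) | Pr. Pr \<in> profiles}"

definition manipulation :: "(('i \<Rightarrow> 'a rel) \<Rightarrow> 'a) \<Rightarrow> 'i \<Rightarrow> 'a rel \<Rightarrow> 'a rel \<Rightarrow> bool" where
  "manipulation f i Pi Pi' \<longleftrightarrow>
     (\<exists>Pr\<in>profiles. (f (Pr(i := Pi')), f (Pr(i := Pi))) \<in> Pi)"

definition obvious_manipulation :: "(('i \<Rightarrow> 'a rel) \<Rightarrow> 'a) \<Rightarrow> 'i \<Rightarrow> 'a rel \<Rightarrow> 'a rel \<Rightarrow> bool" where
  "obvious_manipulation f i Pi Pi' \<longleftrightarrow> manipulation f i Pi Pi' \<and>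
     ((worst Pi (option_set f i Pi'), worst Pi (option_set f i Pi)) \<in> Pi \<or>
      (best Pi (option_set f i Pi'), best Pi (option_set f i Pi)) \<in> Pi)"

definition NOM :: "(('i \<Rightarrow> 'a rel) \<Rightarrow> 'a) \<Rightarrow> bool" where
  "NOM f \<longleftrightarrow> (\<forall>i. \<forall>Pi\<in>prefs. \<forall>Pi'\<in>prefs. \<not> obvious_manipulation f i Pi Pi')"

definition veto_set :: "(('i \<Rightarrow> 'a rel) \<Rightarrow> 'a) \<Rightarrow> 'i \<Rightarrow> 'a set" where
  "veto_set f i = {x. \<exists>Pi\<in>prefs. x \<notin> option_set f i Pi}"

definition veto_prefs :: "(('i \<Rightarrow> 'a rel) \<Rightarrow> 'a) \<Rightarrow> 'i \<Rightarrow> 'a \<Rightarrow> 'a rel set" where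
  "veto_prefs f i x = {Pi\<in>prefs. x \<notin> option_set f i Pi}"

definition strong_veto_set :: "(('i \<Rightarrow> 'a rel) \<Rightarrow> 'a) \<Rightarrow> 'i \<Rightarrow> 'a set" where
  "strong_veto_set f i = {x \<in> veto_set f i. veto_prefs f i x = {Pi\<in>prefs. top Pi \<noteq> x}}"

end

theory Submission
  imports Defs
begin

lemma pref_basic:
  assumes "P \<in> prefs"
  shows pref_irr: "(x, x) \<notin> P"
    and pref_asym: "(x, y) \<in> P \<Longrightarrow> (y, x) \<notin> P"
    and pref_tot: "x \<noteq> y \<Longrightarrow> (x, y) \<in> P \<or> (y, x) \<in> P"
    and pref_trans: "(x, y) \<in> P \<Longrightarrow> (y, z) \<in> P \<Longrightarrow> (x, z) \<in> P"
  using assms unfolding prefs_def strict_linear_order_on_def irrefl_def total_on_def trans_def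
  by blast+

lemma pref_conv: "P \<in> prefs \<Longrightarrow> P\<inverse> \<in> prefs"
  unfolding prefs_def strict_linear_order_on_def irrefl_def total_on_def trans_def
  by blast

lemma ex_best:
  assumes "P \<in> prefs" "finite Y" "Y \<noteq> {}"
  shows "\<exists>x\<in>Y. \<forall>y\<in>Y. y \<noteq> x \<longrightarrow> (x, y) \<in> P"
  using assms(2,3)
proof (induction Y rule: finite_ne_induct)
  case (singleton x) then show ?case by auto
next
  case (insert a F)
  then obtain x where x: "x \<in> F" "\<forall>y\<in>F. y \<noteq> x \<longrightarrow> (x, y) \<in> P" by auto
  show ?case
  proof (cases "(a, x) \<in> P")
    case True
    have "\<forall>y\<in>insert a F. y \<noteq> a \<longrightarrow> (a, y) \<in> P"
    proof (intro ballI impI)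
      fix y assume "y \<in> insert a F" "y \<noteq> a"
      then have "y \<in> F" by simp
      show "(a, y) \<in> P"
      proof (cases "y = x")
        case True then show ?thesis using \<open>(a, x) \<in> P\<close> by simp
      next
        case False
        then have "(x, y) \<in> P" using x \<open>y \<in> F\<close> by blast
        then show ?thesis using pref_trans[OF assms(1) \<open>(a, x) \<in> P\<close>] by blast
      qed
    qed
    then show ?thesis by blast
  next
    case False
    have "a \<noteq> x" using x(1) insert.hyps by blast
    then have "(x, a) \<in> P" using pref_tot[OF assms(1), of a x] False by blast
    then have "\<forall>y\<in>insert a F. y \<noteq> x \<longrightarrow> (x, y) \<in> P" using x(2) by blast
    then show ?thesis using x(1) by blast
  qed
qed

lemma best_prop:
  fixes P :: "'a::finite rel"
  assumes "P \<in> prefs" "Y \<noteq> {}"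
  shows "best P Y \<in> Y \<and> (\<forall>y\<in>Y. y \<noteq> best P Y \<longrightarrow> (best P Y, y) \<in> P)"
proof -
  obtain x where x: "x \<in> Y" "\<forall>y\<in>Y. y \<noteq> x \<longrightarrow> (x, y) \<in> P"
    using ex_best[OF assms(1) finite assms(2)] by blast
  have "\<exists>!x. x \<in> Y \<and> (\<forall>y\<in>Y. y \<noteq> x \<longrightarrow> (x, y) \<in> P)"
  proof (rule ex1I[of _ x])
    show "x \<in> Y \<and> (\<forall>y\<in>Y. y \<noteq> x \<longrightarrow> (x, y) \<in> P)" using x by blast
  next
    fix z assume z: "z \<in> Y \<and> (\<forall>y\<in>Y. y \<noteq> z \<longrightarrow> (z, y) \<in> P)"
    show "z = x"
    proof (rule ccontr)
      assume "z \<noteq> x"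
      then have "(x, z) \<in> P" "(z, x) \<in> P" using x z by auto
      then show False using pref_asym[OF assms(1)] by blast
    qed
  qed
  then show ?thesis unfolding best_def by (rule theI')
qed

lemma worst_prop:
  fixes P :: "'a::finite rel"
  assumes "P \<in> prefs" "Y \<noteq> {}"
  shows "worst P Y \<in> Y \<and> (\<forall>y\<in>Y. y \<noteq> worst P Y \<longrightarrow> (y, worst P Y) \<in> P)"
proof -
  obtain x where x: "x \<in> Y" "\<forall>y\<in>Y. y \<noteq> x \<longrightarrow> (y, x) \<in> P"
    using ex_best[OF pref_conv[OF assms(1)] finite assms(2)] by blast
  have "\<exists>!x. x \<in> Y \<and> (\<forall>y\<in>Y. y \<noteq> x \<longrightarrow> (y, x) \<in> P)"
  proof (rule ex1I[of _ x])
    show "x \<in> Y \<and> (\<forall>y\<in>Y. y \<noteq> x \<longrightarrow> (y, x) \<in> P)" using x by blast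
  next
    fix z assume z: "z \<in> Y \<and> (\<forall>y\<in>Y. y \<noteq> z \<longrightarrow> (y, z) \<in> P)"
    show "z = x"
    proof (rule ccontr)
      assume "z \<noteq> x"
      then have "(x, z) \<in> P" "(z, x) \<in> P" using x z by auto
      then show False using pref_asym[OF assms(1)] by blast
    qed
  qed
  then show ?thesis unfolding worst_def by (rule theI')
qed

lemma top_prop:
  fixes P :: "'a::finite rel"
  assumes "P \<in> prefs"
  shows "y \<noteq> top P \<Longrightarrow> (top P, y) \<in> P"
proof -
  obtain x where x: "\<forall>y. y \<noteq> x \<longrightarrow> (x, y) \<in> P"
    using ex_best[OF assms(1) finite, of UNIV] by blast
  have "\<exists>!x. \<forall>y. y \<noteq> x \<longrightarrow> (x, y) \<in> P"
  proof (rule ex1I[of _ x])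
    show "\<forall>y. y \<noteq> x \<longrightarrow> (x, y) \<in> P" using x by blast
  next
    fix z assume z: "\<forall>y. y \<noteq> z \<longrightarrow> (z, y) \<in> P"
    show "z = x"
    proof (rule ccontr)
      assume "z \<noteq> x"
      then have "(x, z) \<in> P" "(z, x) \<in> P" using x z by auto
      then show False using pref_asym[OF assms(1)] by blast
    qed
  qed
  then have "\<forall>y. y \<noteq> top P \<longrightarrow> (top P, y) \<in> P" unfolding top_def by (rule theI')
  then show "y \<noteq> top P \<Longrightarrow> (top P, y) \<in> P" by blast
qed

lemma top_unique:
  fixes P :: "'a::finite rel"
  assumes "P \<in> prefs" "\<forall>y. y \<noteq> a \<longrightarrow> (a, y) \<in> P"
  shows "top P = a"
  using assms top_prop[OF assms(1), of a] pref_asym[OF assms(1)] by blast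

lemma construct:
  fixes a x :: "'a::finite"
  shows "\<exists>P\<in>prefs. top P = a \<and> (x \<noteq> a \<longrightarrow> (\<forall>y. y \<noteq> x \<longrightarrow> (y, x) \<in> P))"
proof -
  obtain h :: "'a \<Rightarrow> nat" and n where h: "h ` UNIV = {..<n}" "inj_on h UNIV"
    using finite_imp_inj_to_nat_seg[of "UNIV :: 'a set"] by auto
  have hn: "h u < n" for u using h(1) by blast
  have hi: "h u = h v \<Longrightarrow> u = v" for u v using h(2) by (simp add: inj_on_def)
  define k where "k u = (if u = a then 0 else if u = x then n + 1 else h u + 1)" for u
  define P where "P = {(u, v). k u < k v}"
  have kinj: "u \<noteq> v \<Longrightarrow> k u \<noteq> k v" for u v
    unfolding k_def using hn[of u] hn[of v] hi[of u v] by auto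
  have "trans P" unfolding trans_def P_def by auto
  moreover have "irrefl P" unfolding irrefl_def P_def by auto
  moreover have "total_on UNIV P" unfolding total_on_def P_def
  proof (intro ballI impI)
    fix u v :: 'a assume "u \<noteq> v"
    then have "k u \<noteq> k v" by (rule kinj)
    then show "(u, v) \<in> {(u, v). k u < k v} \<or> (v, u) \<in> {(u, v). k u < k v}" by auto
  qed
  ultimately have "P \<in> prefs" unfolding prefs_def strict_linear_order_on_def by blast
  moreover have "top P = a"
    by (rule top_unique[OF \<open>P \<in> prefs\<close>]) (auto simp: P_def k_def)
  moreover have "x \<noteq> a \<longrightarrow> (\<forall>y. y \<noteq> x \<longrightarrow> (y, x) \<in> P)"
  proof (intro impI allI)
    fix y assume "x \<noteq> a" "y \<noteq> x"
    have "h y < n" by (rule hn)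
    then show "(y, x) \<in> P" using \<open>x \<noteq> a\<close> \<open>y \<noteq> x\<close> by (auto simp: P_def k_def)
  qed
  ultimately show ?thesis by blast
qed

lemma upd_prof: "Pr \<in> profiles \<Longrightarrow> Pi \<in> prefs \<Longrightarrow> Pr(i := Pi) \<in> profiles"
  unfolding profiles_def by auto

lemma opt_nonempty: "Pi \<in> prefs \<Longrightarrow> option_set f i Pi \<noteq> {}"
proof -
  assume "Pi \<in> prefs"
  then have "(\<lambda>j. Pi) \<in> profiles" unfolding profiles_def by auto
  then show ?thesis unfolding option_set_def by blast
qed

lemma tops_eq:
  assumes "tops_only f" "Pr \<in> profiles" "Pi \<in> prefs" "Qi \<in> prefs" "top Pi = top Qi"
  shows "f (Pr(i := Pi)) = f (Pr(i := Qi))"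
proof -
  have t: "\<forall>j. top ((Pr(i := Pi)) j) = top ((Pr(i := Qi)) j)" using assms(5) by simp
  have p: "Pr(i := Pi) \<in> profiles" "Pr(i := Qi) \<in> profiles"
    using upd_prof[OF assms(2) assms(3)] upd_prof[OF assms(2) assms(4)] by auto
  have T: "\<And>P P'. P \<in> profiles \<Longrightarrow> P' \<in> profiles \<Longrightarrow> (\<forall>j. top (P j) = top (P' j)) \<Longrightarrow> f P = f P'"
    using assms(1) unfolding tops_only_def by blast
  show ?thesis by (rule T[OF p t])
qed

lemma opt_eq:
  assumes "tops_only f" "Pi \<in> prefs" "Qi \<in> prefs" "top Pi = top Qi"
  shows "option_set f i Pi = option_set f i Qi"
proof -
  have e: "Pr \<in> profiles \<Longrightarrow> f (Pr(i := Pi)) = f (Pr(i := Qi))" for Pr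
    by (rule tops_eq[OF assms(1) _ assms(2-4)])
  show ?thesis unfolding option_set_def
  proof (rule set_eqI, rule iffI)
    fix y assume "y \<in> {f (Pr(i := Pi)) |Pr. Pr \<in> profiles}"
    then obtain Pr where Pr: "Pr \<in> profiles" "y = f (Pr(i := Pi))" by blast
    then have "y = f (Pr(i := Qi))" using e[OF Pr(1)] by simp
    then show "y \<in> {f (Pr(i := Qi)) |Pr. Pr \<in> profiles}" using Pr(1) by blast
  next
    fix y assume "y \<in> {f (Pr(i := Qi)) |Pr. Pr \<in> profiles}"
    then obtain Pr where Pr: "Pr \<in> profiles" "y = f (Pr(i := Qi))" by blast
    then have "y = f (Pr(i := Pi))" using e[OF Pr(1)] by simp
    then show "y \<in> {f (Pr(i := Pi)) |Pr. Pr \<in> profiles}" using Pr(1) by blast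
  qed
qed

theorem theorem1:
  fixes f :: "('i::finite \<Rightarrow> 'a::finite rel) \<Rightarrow> 'a"
  assumes "CARD('i) \<ge> 2" and "CARD('a) \<ge> 2"
    and "onto_rule f" and "tops_only f"
  shows "NOM f \<longleftrightarrow> (\<forall>i. strong_veto_set f i = veto_set f i)"
proof
  assume nom: "NOM f"
  show "\<forall>i. strong_veto_set f i = veto_set f i"
  proof
    fix i
    show "strong_veto_set f i = veto_set f i"
    proof
      show "strong_veto_set f i \<subseteq> veto_set f i" unfolding strong_veto_set_def by blast
    next
      show "veto_set f i \<subseteq> strong_veto_set f i"
      proof
        fix x assume xv: "x \<in> veto_set f i"
        then obtain Pa where Pa: "Pa \<in> prefs" "x \<notin> option_set f i Pa"
          unfolding veto_set_def by blast
        have s1: "x \<in> option_set f i Q" if Q: "Q \<in> prefs" "top Q = x" for Q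
        proof (rule ccontr)
          assume nx: "x \<notin> option_set f i Q"
          obtain Pr0 where Pr0: "Pr0 \<in> profiles" "f Pr0 = x"
          proof -
            have "x \<in> f ` profiles" using assms(3) unfolding onto_rule_def by simp
            then show ?thesis using that by blast
          qed
          define Pc where "Pc = Pr0 i"
          have Pc: "Pc \<in> prefs" using Pr0 unfolding Pc_def profiles_def by auto
          have eq: "Pr0(i := Pc) = Pr0" unfolding Pc_def by simp
          have "x = f (Pr0(i := Pc))" using Pr0 eq by simp
          then have xin: "x \<in> option_set f i Pc" unfolding option_set_def using Pr0(1) by blast
          have ne: "f (Pr0(i := Q)) \<noteq> x" using nx Pr0 unfolding option_set_def by blast
          have "(x, f (Pr0(i := Q))) \<in> Q" using top_prop[OF Q(1)] Q(2) ne by auto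
          then have "(f (Pr0(i := Pc)), f (Pr0(i := Q))) \<in> Q" using Pr0 eq by simp
          then have man: "manipulation f i Q Pc"
            unfolding manipulation_def using Pr0(1) by blast
          have b1: "best Q (option_set f i Pc) = x"
          proof (rule ccontr)
            assume "best Q (option_set f i Pc) \<noteq> x"
            then have "(best Q (option_set f i Pc), x) \<in> Q" "(x, best Q (option_set f i Pc)) \<in> Q"
              using best_prop[OF Q(1) opt_nonempty[OF Pc, where f=f and i=i]] xin top_prop[OF Q(1)] Q(2) by auto
            then show False using pref_asym[OF Q(1)] by blast
          qed
          have b2: "best Q (option_set f i Q) \<noteq> x"
            using best_prop[OF Q(1) opt_nonempty[OF Q(1), where f=f and i=i]] nx by auto
          have "obvious_manipulation f i Q Pc"
            unfolding obvious_manipulation_def using man b1 b2 top_prop[OF Q(1)] Q(2) by auto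
          then show False using nom Q(1) Pc unfolding NOM_def by blast
        qed
        have s2: "x \<notin> option_set f i Q" if Q: "Q \<in> prefs" "top Q \<noteq> x" for Q
        proof
          assume xq: "x \<in> option_set f i Q"
          obtain Pc where Pc: "Pc \<in> prefs" "top Pc = top Q" "\<forall>y. y \<noteq> x \<longrightarrow> (y, x) \<in> Pc"
            using construct[of "top Q" x] Q(2) by auto
          have oe: "option_set f i Pc = option_set f i Q" using opt_eq[OF assms(4) Pc(1) Q(1) Pc(2)] .
          obtain Pr where Pr: "Pr \<in> profiles" "f (Pr(i := Q)) = x" using xq unfolding option_set_def by blast
          have fPc: "f (Pr(i := Pc)) = x" using tops_eq[OF assms(4) Pr(1) Pc(1) Q(1) Pc(2)] Pr(2) by simp
          have "f (Pr(i := Pa)) \<in> option_set f i Pa" using Pr(1) unfolding option_set_def by blast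
          then have "f (Pr(i := Pa)) \<noteq> x" using Pa(2) by auto
          then have "(f (Pr(i := Pa)), f (Pr(i := Pc))) \<in> Pc" using fPc Pc(3) by simp
          then have man: "manipulation f i Pc Pa" unfolding manipulation_def using Pr(1) by blast
          have xin: "x \<in> option_set f i Pc" using oe xq by simp
          have w1: "worst Pc (option_set f i Pc) = x"
          proof (rule ccontr)
            assume "worst Pc (option_set f i Pc) \<noteq> x"
            then have "(worst Pc (option_set f i Pc), x) \<in> Pc" "(x, worst Pc (option_set f i Pc)) \<in> Pc"
              using worst_prop[OF Pc(1) opt_nonempty[OF Pc(1), where f=f and i=i]] xin Pc(3) by auto
            then show False using pref_asym[OF Pc(1)] by blast
          qed
          have w2: "worst Pc (option_set f i Pa) \<noteq> x"
            using worst_prop[OF Pc(1) opt_nonempty[OF Pa(1), where f=f and i=i]] Pa(2) by auto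
          have "obvious_manipulation f i Pc Pa"
            unfolding obvious_manipulation_def using man w1 w2 Pc(3) by auto
          then show False using nom Pc(1) Pa(1) unfolding NOM_def by blast
        qed
        have "veto_prefs f i x = {Pi\<in>prefs. top Pi \<noteq> x}"
          unfolding veto_prefs_def using s1 s2 by blast
        then show "x \<in> strong_veto_set f i" unfolding strong_veto_set_def using xv by blast
      qed
    qed
  qed
next
  assume H: "\<forall>i. strong_veto_set f i = veto_set f i"
  have sv: "veto_prefs f i x = {Pi\<in>prefs. top Pi \<noteq> x}" if "x \<in> veto_set f i" for i x
  proof -
    have "x \<in> strong_veto_set f i" using H that by simp
    then show ?thesis unfolding strong_veto_set_def by simp
  qed
  show "NOM f" unfolding NOM_def
  proof (intro allI ballI notI)
    fix i Pi Pi'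
    assume Pi: "Pi \<in> prefs" and Pi': "Pi' \<in> prefs" and om: "obvious_manipulation f i Pi Pi'"
    define S where "S = option_set f i Pi"
    define S' where "S' = option_set f i Pi'"
    have Sne: "S \<noteq> {}" "S' \<noteq> {}" unfolding S_def S'_def using opt_nonempty[OF Pi, where f=f and i=i] opt_nonempty[OF Pi', where f=f and i=i] by auto
    have aS: "top Pi \<in> S"
    proof (rule ccontr)
      assume "top Pi \<notin> S"
      then have "top Pi \<in> veto_set f i" unfolding veto_set_def S_def using Pi by blast
      then have "Pi \<notin> veto_prefs f i (top Pi)" using sv by blast
      then show False using \<open>top Pi \<notin> S\<close> Pi unfolding veto_prefs_def S_def by blast
    qed
    have cases: "(worst Pi S', worst Pi S) \<in> Pi \<or> (best Pi S', best Pi S) \<in> Pi"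
      using om unfolding obvious_manipulation_def S_def S'_def by blast
    show False
    proof (cases "(best Pi S', best Pi S) \<in> Pi")
      case True
      have "best Pi S = top Pi"
      proof (rule ccontr)
        assume "best Pi S \<noteq> top Pi"
        then have "(best Pi S, top Pi) \<in> Pi" "(top Pi, best Pi S) \<in> Pi"
          using best_prop[OF Pi Sne(1)] aS top_prop[OF Pi] by auto
        then show False using pref_asym[OF Pi] by blast
      qed
      then have "(best Pi S', top Pi) \<in> Pi" using True by simp
      moreover have "best Pi S' \<noteq> top Pi" using calculation pref_irr[OF Pi] by auto
      ultimately show False using top_prop[OF Pi] pref_asym[OF Pi] by blast
    next
      case False
      then have wc: "(worst Pi S', worst Pi S) \<in> Pi" using cases by blast
      define w where "w = worst Pi S"
      have wS: "w \<in> S" using worst_prop[OF Pi Sne(1)] w_def by blast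
      have "w \<notin> S'"
      proof
        assume "w \<in> S'"
        have "w \<noteq> worst Pi S'" using wc pref_irr[OF Pi] unfolding w_def by auto
        then have "(w, worst Pi S') \<in> Pi" using worst_prop[OF Pi Sne(2)] \<open>w \<in> S'\<close> by auto
        then show False using wc pref_asym[OF Pi] unfolding w_def by blast
      qed
      then have "w \<in> veto_set f i" unfolding veto_set_def S'_def using Pi' by blast
      then have "Pi \<notin> veto_prefs f i w \<longleftrightarrow> top Pi = w" using sv Pi by blast
      then have "top Pi = w" using wS unfolding veto_prefs_def S_def by blast
      then have "(worst Pi S', top Pi) \<in> Pi" using wc unfolding w_def by simp
      moreover have "worst Pi S' \<noteq> top Pi" using calculation pref_irr[OF Pi] by auto
      ultimately show False using top_prop[OF Pi] pref_asym[OF Pi] by blast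
    qed
  qed
qed

end
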